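(* Let $\Sigma$ be a rational fan and $f\in\mathrm{PL}(\Sigma)$. Then $[e^f]=1$ in $\underline{\mathrm{PE}}(\Sigma)$ if and only if $f\in\mathrm{L}(\Sigma)$.
   Context: $N$ is a free abelian group of rank $n$, $N_\mathbb{R}=N\otimes_\mathbb{Z}\mathbb{R}$, $M=\mathrm{Hom}_\mathbb{Z}(N,\mathbb{Z})$; elements of $M$ are viewed as integral linear functions $N_\mathbb{R}\to\mathbb{R}$. A rational fan is a finite collection of rational polyhedral cones in $N_\mathbb{R}$, closed under faces, with pairwise intersections faces of both; $|\Sigma|$ is its support. $\mathrm{PL}(\Sigma)$ is the group of functions $f:|\Sigma|\to\mathbb{R}$ such that for every cone $\sigma\in\Sigma$ there is $m\in M$ with $f|_\sigma=m|_\sigma$; $\mathrm{L}(\Sigma)\subseteq\mathrm{PL}(\Sigma)$ is the subgroup of restrictions $m|_{|\Sigma|}$, $m\in M$. $\mathrm{PE}(\Sigma)$ is the subring of the ring of real-valued functions on $|\Sigma|$ generated by the $e^f$, $f\in\mathrm{PL}(\Sigma)$, and $\underline{\mathrm{PE}}(\Sigma)=\mathrm{PE}(\Sigma)/\langle e^\ell-1\mid \ell\in\mathrm{L}(\Sigma)\rangle$. *)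

theory Defs
  imports "HOL-Analysis.Analysis"
begin

text \<open>N = Z^n inside N_R = real^'n (rank n = CARD('n)); M = Hom(N,Z) is identified with
  integer vectors m, acting by the inner product x \<mapsto> m \<bullet> x.\<close>

definition integral_vec :: "real^'n \<Rightarrow> bool" where
  "integral_vec v \<longleftrightarrow> (\<forall>i. v $ i \<in> \<int>)"

definition rational_polyhedral_cone :: "(real^'n) set \<Rightarrow> bool" where
  "rational_polyhedral_cone \<sigma> \<longleftrightarrow>
     (\<exists>S. finite S \<and> (\<forall>v\<in>S. integral_vec v) \<and> \<sigma> = convex_cone hull S)"

text \<open>Rational fan. Faces of cones are nonempty (they contain 0); the library's face_of
  also counts the empty set as a face, so it is excluded explicitly.\<close>
definition rational_fan :: "(real^'n) set set \<Rightarrow> bool" where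
  "rational_fan \<Sigma> \<longleftrightarrow> finite \<Sigma>
     \<and> (\<forall>\<sigma>\<in>\<Sigma>. rational_polyhedral_cone \<sigma>)
     \<and> (\<forall>\<sigma>\<in>\<Sigma>. \<forall>\<tau>. \<tau> face_of \<sigma> \<and> \<tau> \<noteq> {} \<longrightarrow> \<tau> \<in> \<Sigma>)
     \<and> (\<forall>\<sigma>\<in>\<Sigma>. \<forall>\<tau>\<in>\<Sigma>. (\<sigma> \<inter> \<tau>) face_of \<sigma> \<and> (\<sigma> \<inter> \<tau>) face_of \<tau>)"

definition support :: "(real^'n) set set \<Rightarrow> (real^'n) set" where
  "support \<Sigma> = \<Union>\<Sigma>"

text \<open>A function |Sigma| -> R is represented by any function on real^'n; only its values
  on the support matter.\<close>
definition PL :: "(real^'n) set set \<Rightarrow> (real^'n \<Rightarrow> real) set" where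
  "PL \<Sigma> = {f. \<forall>\<sigma>\<in>\<Sigma>. \<exists>m. integral_vec m \<and> (\<forall>x\<in>\<sigma>. f x = m \<bullet> x)}"

definition L :: "(real^'n) set set \<Rightarrow> (real^'n \<Rightarrow> real) set" where
  "L \<Sigma> = {f. \<exists>m. integral_vec m \<and> (\<forall>x\<in>support \<Sigma>. f x = m \<bullet> x)}"

text \<open>Elements of the ring of real functions on |Sigma| are represented canonically by
  functions on real^'n that vanish outside the support.\<close>
definition restr :: "(real^'n) set set \<Rightarrow> (real^'n \<Rightarrow> real) \<Rightarrow> (real^'n \<Rightarrow> real)" where
  "restr \<Sigma> g = (\<lambda>x. if x \<in> support \<Sigma> then g x else 0)"

definition expfun :: "(real^'n) set set \<Rightarrow> (real^'n \<Rightarrow> real) \<Rightarrow> (real^'n \<Rightarrow> real)" where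
  "expfun \<Sigma> f = restr \<Sigma> (\<lambda>x. exp (f x))"

inductive_set PE :: "(real^'n) set set \<Rightarrow> (real^'n \<Rightarrow> real) set" for \<Sigma> where
  one: "restr \<Sigma> (\<lambda>x. 1) \<in> PE \<Sigma>"
| gen: "f \<in> PL \<Sigma> \<Longrightarrow> expfun \<Sigma> f \<in> PE \<Sigma>"
| add: "a \<in> PE \<Sigma> \<Longrightarrow> b \<in> PE \<Sigma> \<Longrightarrow> (\<lambda>x. a x + b x) \<in> PE \<Sigma>"
| neg: "a \<in> PE \<Sigma> \<Longrightarrow> (\<lambda>x. - a x) \<in> PE \<Sigma>"
| mul: "a \<in> PE \<Sigma> \<Longrightarrow> b \<in> PE \<Sigma> \<Longrightarrow> (\<lambda>x. a x * b x) \<in> PE \<Sigma>"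

inductive_set LIdeal :: "(real^'n) set set \<Rightarrow> (real^'n \<Rightarrow> real) set" for \<Sigma> where
  zero: "(\<lambda>x. 0) \<in> LIdeal \<Sigma>"
| gen: "l \<in> L \<Sigma> \<Longrightarrow> (\<lambda>x. expfun \<Sigma> l x - restr \<Sigma> (\<lambda>x. 1) x) \<in> LIdeal \<Sigma>"
| add: "a \<in> LIdeal \<Sigma> \<Longrightarrow> b \<in> LIdeal \<Sigma> \<Longrightarrow> (\<lambda>x. a x + b x) \<in> LIdeal \<Sigma>"
| mul: "r \<in> PE \<Sigma> \<Longrightarrow> a \<in> LIdeal \<Sigma> \<Longrightarrow> (\<lambda>x. r x * a x) \<in> LIdeal \<Sigma>"

definition class_is_one :: "(real^'n) set set \<Rightarrow> (real^'n \<Rightarrow> real) \<Rightarrow> bool" where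
  "class_is_one \<Sigma> f \<longleftrightarrow> (\<lambda>x. expfun \<Sigma> f x - restr \<Sigma> (\<lambda>x. 1) x) \<in> LIdeal \<Sigma>"

end

theory Submission
  imports Defs
begin

lemma supp_scale:
  assumes "rational_fan \<Sigma>" "\<sigma> \<in> \<Sigma>" "x \<in> \<sigma>" "0 \<le> t"
  shows "t *\<^sub>R x \<in> \<sigma>"
proof -
  have "rational_polyhedral_cone \<sigma>" using assms(1,2) unfolding rational_fan_def by simp
  then obtain S where S: "\<sigma> = convex_cone hull S"
    unfolding rational_polyhedral_cone_def by blast
  have "x \<in> convex_cone hull S" using S assms(3) by simp
  hence "t *\<^sub>R x \<in> convex_cone hull S" using assms(4) by (rule convex_cone_hull_mul)
  thus ?thesis using S by simp
qed

lemma PL_scale: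
  assumes "rational_fan \<Sigma>" "f \<in> PL \<Sigma>" "x \<in> support \<Sigma>" "0 \<le> t"
  shows "f (t *\<^sub>R x) = t * f x" "t *\<^sub>R x \<in> support \<Sigma>"
proof -
  obtain \<sigma> where s: "\<sigma> \<in> \<Sigma>" "x \<in> \<sigma>" using assms(3) unfolding support_def by blast
  then obtain m where m: "\<forall>y\<in>\<sigma>. f y = m \<bullet> y" using assms(2) unfolding PL_def by blast
  have tx: "t *\<^sub>R x \<in> \<sigma>" using supp_scale[OF assms(1) s assms(4)] .
  show "f (t *\<^sub>R x) = t * f x" using m tx s(2) by simp
  show "t *\<^sub>R x \<in> support \<Sigma>" using tx s(1) unfolding support_def by blast
qed

lemma supp_scale2:
  assumes "rational_fan \<Sigma>" "x \<in> support \<Sigma>" "0 \<le> t"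
  shows "t *\<^sub>R x \<in> support \<Sigma>"
proof -
  obtain \<sigma> where s: "\<sigma> \<in> \<Sigma>" "x \<in> \<sigma>" using assms(2) unfolding support_def by blast
  have "t *\<^sub>R x \<in> \<sigma>" using supp_scale[OF assms(1) s assms(3)] .
  thus ?thesis using s(1) unfolding support_def by blast
qed

lemma integral_vec_smult:
  assumes "integral_vec m" "k \<in> \<int>"
  shows "integral_vec (k *\<^sub>R m)"
  using assms unfolding integral_vec_def by (simp add: Ints_mult)

lemma integral_vec_add:
  assumes "integral_vec m" "integral_vec m'"
  shows "integral_vec (m + m')"
  using assms unfolding integral_vec_def by (simp add: Ints_add)

lemma exp_lim: "((\<lambda>t::real. (exp (t * c) - 1) / t) \<longlongrightarrow> c) (at_right 0)"
proof -
  have "((\<lambda>h::real. (exp ((0 + h) * c) - exp (0 * c)) / h) \<longlongrightarrow> c) (at 0)"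
    by (rule DERIV_D) (auto intro!: derivative_eq_intros)
  hence "((\<lambda>t::real. (exp (t * c) - 1) / t) \<longlongrightarrow> c) (at 0)" by simp
  thus ?thesis by (simp add: filterlim_at_split)
qed

lemma PE_inv:
  assumes "rational_fan \<Sigma>" "r \<in> PE \<Sigma>"
  shows "\<exists>k\<in>\<int>. \<forall>x\<in>support \<Sigma>. ((\<lambda>t. r (t *\<^sub>R x)) \<longlongrightarrow> k) (at_right 0)"
  using assms(2)
proof induction
  case one
  have "\<forall>x\<in>support \<Sigma>. ((\<lambda>t. restr \<Sigma> (\<lambda>x. 1) (t *\<^sub>R x)) \<longlongrightarrow> 1) (at_right 0)"
  proof
    fix x assume x: "x \<in> support \<Sigma>"
    have "eventually (\<lambda>t. restr \<Sigma> (\<lambda>x. 1) (t *\<^sub>R x) = 1) (at_right (0::real))"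
      unfolding eventually_at_right_field
      by (rule exI[of _ 1]) (auto simp: restr_def intro: supp_scale2[OF assms(1) x])
    thus "((\<lambda>t. restr \<Sigma> (\<lambda>x. 1) (t *\<^sub>R x)) \<longlongrightarrow> 1) (at_right 0)"
      by (simp add: tendsto_eventually)
  qed
  thus ?case using Ints_1 by blast
next
  case (gen f)
  have "\<forall>x\<in>support \<Sigma>. ((\<lambda>t. expfun \<Sigma> f (t *\<^sub>R x)) \<longlongrightarrow> 1) (at_right 0)"
  proof
    fix x assume x: "x \<in> support \<Sigma>"
    have ev: "eventually (\<lambda>t. expfun \<Sigma> f (t *\<^sub>R x) = exp (t * f x)) (at_right (0::real))"
      unfolding eventually_at_right_field
      by (rule exI[of _ 1]) (auto simp: expfun_def restr_def PL_scale[OF assms(1) gen x])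
    have "((\<lambda>t. exp (t * f x)) \<longlongrightarrow> exp (0 * f x)) (at_right (0::real))"
      by (intro tendsto_intros)
    hence "((\<lambda>t. exp (t * f x)) \<longlongrightarrow> 1) (at_right (0::real))" by simp
    thus "((\<lambda>t. expfun \<Sigma> f (t *\<^sub>R x)) \<longlongrightarrow> 1) (at_right 0)"
      using tendsto_cong[OF ev] by blast
  qed
  thus ?case using Ints_1 by blast
next
  case (add a b)
  then obtain k1 k2 where k: "k1 \<in> \<int>" "k2 \<in> \<int>"
    "\<forall>x\<in>support \<Sigma>. ((\<lambda>t. a (t *\<^sub>R x)) \<longlongrightarrow> k1) (at_right 0)"
    "\<forall>x\<in>support \<Sigma>. ((\<lambda>t. b (t *\<^sub>R x)) \<longlongrightarrow> k2) (at_right 0)" by blast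
  have "\<forall>x\<in>support \<Sigma>. ((\<lambda>t. a (t *\<^sub>R x) + b (t *\<^sub>R x)) \<longlongrightarrow> k1 + k2) (at_right 0)"
  proof
    fix x assume "x \<in> support \<Sigma>"
    thus "((\<lambda>t. a (t *\<^sub>R x) + b (t *\<^sub>R x)) \<longlongrightarrow> k1 + k2) (at_right 0)"
      using k(3,4) by (intro tendsto_add) blast+
  qed
  moreover have "k1 + k2 \<in> \<int>" using k(1,2) by simp
  ultimately show ?case by blast
next
  case (neg a)
  then obtain k1 where k: "k1 \<in> \<int>"
    "\<forall>x\<in>support \<Sigma>. ((\<lambda>t. a (t *\<^sub>R x)) \<longlongrightarrow> k1) (at_right 0)" by blast
  have "\<forall>x\<in>support \<Sigma>. ((\<lambda>t. - a (t *\<^sub>R x)) \<longlongrightarrow> - k1) (at_right 0)"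
  proof
    fix x assume "x \<in> support \<Sigma>"
    thus "((\<lambda>t. - a (t *\<^sub>R x)) \<longlongrightarrow> - k1) (at_right 0)"
      using k(2) by (intro tendsto_minus) blast
  qed
  moreover have "- k1 \<in> \<int>" using k(1) by simp
  ultimately show ?case by blast
next
  case (mul a b)
  then obtain k1 k2 where k: "k1 \<in> \<int>" "k2 \<in> \<int>"
    "\<forall>x\<in>support \<Sigma>. ((\<lambda>t. a (t *\<^sub>R x)) \<longlongrightarrow> k1) (at_right 0)"
    "\<forall>x\<in>support \<Sigma>. ((\<lambda>t. b (t *\<^sub>R x)) \<longlongrightarrow> k2) (at_right 0)" by blast
  have "\<forall>x\<in>support \<Sigma>. ((\<lambda>t. a (t *\<^sub>R x) * b (t *\<^sub>R x)) \<longlongrightarrow> k1 * k2) (at_right 0)"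
  proof
    fix x assume "x \<in> support \<Sigma>"
    thus "((\<lambda>t. a (t *\<^sub>R x) * b (t *\<^sub>R x)) \<longlongrightarrow> k1 * k2) (at_right 0)"
      using k(3,4) by (intro tendsto_mult) blast+
  qed
  moreover have "k1 * k2 \<in> \<int>" using k(1,2) by simp
  ultimately show ?case by blast
qed

lemma LIdeal_inv:
  assumes "rational_fan \<Sigma>" "a \<in> LIdeal \<Sigma>"
  shows "\<exists>M. integral_vec M \<and> (\<forall>x\<in>support \<Sigma>. ((\<lambda>t. a (t *\<^sub>R x) / t) \<longlongrightarrow> M \<bullet> x) (at_right 0))"
  using assms(2)
proof induction
  case zero
  show ?case by (intro exI[of _ 0]) (auto simp: integral_vec_def)
next
  case (gen l)
  then obtain m where m: "integral_vec m" "\<forall>x\<in>support \<Sigma>. l x = m \<bullet> x" unfolding L_def by blast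
  have "\<forall>x\<in>support \<Sigma>. ((\<lambda>t. (expfun \<Sigma> l (t *\<^sub>R x) - restr \<Sigma> (\<lambda>x. 1) (t *\<^sub>R x)) / t) \<longlongrightarrow> m \<bullet> x) (at_right 0)"
  proof
    fix x assume x: "x \<in> support \<Sigma>"
    have ev: "eventually (\<lambda>t. (expfun \<Sigma> l (t *\<^sub>R x) - restr \<Sigma> (\<lambda>x. 1) (t *\<^sub>R x)) / t
        = (exp (t * (m \<bullet> x)) - 1) / t) (at_right (0::real))"
      unfolding eventually_at_right_field
    proof (rule exI[of _ 1], intro conjI allI impI)
      fix t :: real assume t: "0 < t" "t < 1"
      have "t *\<^sub>R x \<in> support \<Sigma>"
        using supp_scale2[OF assms(1) x, of t] t by simp
      thus "(expfun \<Sigma> l (t *\<^sub>R x) - restr \<Sigma> (\<lambda>x. 1) (t *\<^sub>R x)) / t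
        = (exp (t * (m \<bullet> x)) - 1) / t"
        using m(2) by (simp add: expfun_def restr_def)
    qed simp
    show "((\<lambda>t. (expfun \<Sigma> l (t *\<^sub>R x) - restr \<Sigma> (\<lambda>x. 1) (t *\<^sub>R x)) / t) \<longlongrightarrow> m \<bullet> x) (at_right 0)"
      using exp_lim[of "m \<bullet> x"] tendsto_cong[OF ev] by blast
  qed
  thus ?case using m(1) by blast
next
  case (add a b)
  then obtain M1 M2 where "integral_vec M1" "integral_vec M2" and add:
    "\<forall>x\<in>support \<Sigma>. ((\<lambda>t. a (t *\<^sub>R x) / t) \<longlongrightarrow> M1 \<bullet> x) (at_right 0)"
    "\<forall>x\<in>support \<Sigma>. ((\<lambda>t. b (t *\<^sub>R x) / t) \<longlongrightarrow> M2 \<bullet> x) (at_right 0)" by blast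
  have "\<forall>x\<in>support \<Sigma>. ((\<lambda>t. (a (t *\<^sub>R x) + b (t *\<^sub>R x)) / t) \<longlongrightarrow> (M1 + M2) \<bullet> x) (at_right 0)"
  proof
    fix x assume x: "x \<in> support \<Sigma>"
    have "((\<lambda>t. a (t *\<^sub>R x) / t + b (t *\<^sub>R x) / t) \<longlongrightarrow> M1 \<bullet> x + M2 \<bullet> x) (at_right 0)"
      using add x by (intro tendsto_add) blast+
    thus "((\<lambda>t. (a (t *\<^sub>R x) + b (t *\<^sub>R x)) / t) \<longlongrightarrow> (M1 + M2) \<bullet> x) (at_right 0)"
      by (simp add: add_divide_distrib inner_add_left)
  qed
  thus ?case using integral_vec_add[OF \<open>integral_vec M1\<close> \<open>integral_vec M2\<close>] by blast
next
  case (mul r a)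
  obtain k where k: "k \<in> \<int>" "\<forall>x\<in>support \<Sigma>. ((\<lambda>t. r (t *\<^sub>R x)) \<longlongrightarrow> k) (at_right 0)"
    using PE_inv[OF assms(1) mul(1)] by blast
  obtain M where M: "integral_vec M"
    "\<forall>x\<in>support \<Sigma>. ((\<lambda>t. a (t *\<^sub>R x) / t) \<longlongrightarrow> M \<bullet> x) (at_right 0)" using mul by blast
  have "\<forall>x\<in>support \<Sigma>. ((\<lambda>t. r (t *\<^sub>R x) * a (t *\<^sub>R x) / t) \<longlongrightarrow> (k *\<^sub>R M) \<bullet> x) (at_right 0)"
  proof
    fix x assume x: "x \<in> support \<Sigma>"
    have "((\<lambda>t. r (t *\<^sub>R x) * (a (t *\<^sub>R x) / t)) \<longlongrightarrow> k * (M \<bullet> x)) (at_right 0)"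
      using k(2) M(2) x by (intro tendsto_mult) blast+
    thus "((\<lambda>t. r (t *\<^sub>R x) * a (t *\<^sub>R x) / t) \<longlongrightarrow> (k *\<^sub>R M) \<bullet> x) (at_right 0)" by simp
  qed
  thus ?case using integral_vec_smult[OF M(1) k(1)] by blast
qed

theorem lemma2:
  fixes \<Sigma> :: "(real^'n) set set" and f :: "real^'n \<Rightarrow> real"
  assumes "rational_fan \<Sigma>" and "f \<in> PL \<Sigma>"
  shows "class_is_one \<Sigma> f \<longleftrightarrow> f \<in> L \<Sigma>"
proof
  assume "f \<in> L \<Sigma>"
  thus "class_is_one \<Sigma> f" unfolding class_is_one_def by (rule LIdeal.gen)
next
  assume "class_is_one \<Sigma> f"
  then obtain M where M: "integral_vec M"
    "\<forall>x\<in>support \<Sigma>. ((\<lambda>t. (expfun \<Sigma> f (t *\<^sub>R x) - restr \<Sigma> (\<lambda>x. 1) (t *\<^sub>R x)) / t) \<longlongrightarrow> M \<bullet> x) (at_right 0)"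
    using LIdeal_inv[OF assms(1)] unfolding class_is_one_def by blast
  have "\<forall>x\<in>support \<Sigma>. f x = M \<bullet> x"
  proof
    fix x assume x: "x \<in> support \<Sigma>"
    have ev: "eventually (\<lambda>t. (expfun \<Sigma> f (t *\<^sub>R x) - restr \<Sigma> (\<lambda>x. 1) (t *\<^sub>R x)) / t
        = (exp (t * f x) - 1) / t) (at_right (0::real))"
      unfolding eventually_at_right_field
      by (rule exI[of _ 1]) (auto simp: expfun_def restr_def PL_scale[OF assms(1,2) x])
    have l1: "((\<lambda>t. (expfun \<Sigma> f (t *\<^sub>R x) - restr \<Sigma> (\<lambda>x. 1) (t *\<^sub>R x)) / t) \<longlongrightarrow> f x) (at_right 0)"
      using exp_lim[of "f x"] tendsto_cong[OF ev] by blast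
    show "f x = M \<bullet> x"
      using tendsto_unique[OF _ l1 M(2)[rule_format, OF x]] by simp
  qed
  thus "f \<in> L \<Sigma>" unfolding L_def using M(1) by blast
qed

end
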